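(* Let $k\ge1$ be an integer and $\rho\in(0,1)$. The function $\tilde\rho$ is convex on $[1,+\infty)$. Consequently, for every $C\in[1,C_*]$, $$\tilde\rho(C)\le\frac{C_*-C}{C_*-1}\rho^k+\frac{C-1}{C_*-1}\rho_*.$$
   Context: $\mathbb{R}_k[X]$ denotes real polynomials of degree at most $k$, and $\|p\|_1$ is the sum of absolute values of the coefficients of $p$. For $C\ge1$, $\tilde\rho(C)=\min\{\max_{x\in[0,\rho]}|p(x)| : p\in\mathbb{R}_k[X],\ p(1)=1,\ \|p\|_1\le C\}$. Let $T_k$ be the Chebyshev polynomial of the first kind of degree $k$, $p_*(X)=T_k(\tfrac{2X-\rho}{\rho})/|T_k(\tfrac{2-\rho}{\rho})|$ (the minimizer of $\max_{[0,\rho]}|p|$ over $p\in\mathbb{R}_k[X]$ with $p(1)=1$), $C_*=\|p_*\|_1$, and $\rho_*=\frac{2\beta^k}{1+\beta^{2k}}$ with $\beta=\frac{1-\sqrt{1-\rho}}{1+\sqrt{1-\rho}}$ (the optimal value of that unconstrained problem). *)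

theory Defs
  imports "HOL-Analysis.Analysis" "HOL-Computational_Algebra.Polynomial"
begin

fun cheb_T :: "nat \<Rightarrow> real poly" where
  "cheb_T 0 = 1"
| "cheb_T (Suc 0) = [:0, 1:]"
| "cheb_T (Suc (Suc n)) = [:0, 2:] * cheb_T (Suc n) - cheb_T n"

definition l1_norm :: "real poly \<Rightarrow> real" where
  "l1_norm p = (\<Sum>i\<le>degree p. \<bar>coeff p i\<bar>)"

definition sup_norm_on :: "real \<Rightarrow> real poly \<Rightarrow> real" where
  "sup_norm_on \<rho> p = (SUP x\<in>{0..\<rho>}. \<bar>poly p x\<bar>)"

text \<open>rho tilde (C): the constrained minimum (taken as an infimum; it is attained).\<close>
definition rho_tilde :: "nat \<Rightarrow> real \<Rightarrow> real \<Rightarrow> real" where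
  "rho_tilde k \<rho> C = (INF p\<in>{p. degree p \<le> k \<and> poly p 1 = 1 \<and> l1_norm p \<le> C}. sup_norm_on \<rho> p)"

definition p_star :: "nat \<Rightarrow> real \<Rightarrow> real poly" where
  "p_star k \<rho> = smult (1 / \<bar>poly (cheb_T k) ((2 - \<rho>) / \<rho>)\<bar>)
                     (pcompose (cheb_T k) [: -1, 2 / \<rho> :])"

definition C_star :: "nat \<Rightarrow> real \<Rightarrow> real" where
  "C_star k \<rho> = l1_norm (p_star k \<rho>)"

definition beta_rho :: "real \<Rightarrow> real" where
  "beta_rho \<rho> = (1 - sqrt (1 - \<rho>)) / (1 + sqrt (1 - \<rho>))"

definition rho_star :: "nat \<Rightarrow> real \<Rightarrow> real" where
  "rho_star k \<rho> = 2 * beta_rho \<rho> ^ k / (1 + beta_rho \<rho> ^ (2 * k))"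

end

theory Submission imports Defs begin

lemma cheb_cos: "poly (cheb_T n) (cos t) = cos (real n * t)"
proof (induction n rule: cheb_T.induct)
  case (3 n)
  have "cos (real (Suc (Suc n)) * t) + cos (real n * t) = 2 * cos t * cos (real (Suc n) * t)"
  proof -
    have a: "real (Suc (Suc n)) * t = real (Suc n) * t + t" by (simp add: algebra_simps)
    have b: "real n * t = real (Suc n) * t - t" by (simp add: algebra_simps)
    show ?thesis unfolding a b cos_add cos_diff by (simp add: algebra_simps)
  qed
  then show ?case using 3 by (simp add: algebra_simps)
qed auto

lemma cosh_aux:
  fixes z w :: real
  assumes "z \<noteq> 0" "w \<noteq> 0"
  shows "2*((z+1/z)/2)*((z*w + 1/(z*w))/2) - (w+1/w)/2 = (z*(z*w) + 1/(z*(z*w)))/2"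
  using assms by (simp add: field_simps)

lemma cheb_cosh:
  assumes "z > 0"
  shows "poly (cheb_T n) ((z + 1/z)/2) = (z^n + 1/z^n)/2"
proof (induction n rule: cheb_T.induct)
  case (3 n)
  have e: "poly (cheb_T (Suc (Suc n))) ((z + 1/z)/2) = 2 * ((z + 1/z)/2) * poly (cheb_T (Suc n)) ((z + 1/z)/2) - poly (cheb_T n) ((z + 1/z)/2)"
    by simp
  show ?case unfolding e 3 power_Suc
    by (rule cosh_aux) (use assms in auto)
qed auto

lemma cheb_bounded:
  assumes "-1 \<le> y" "y \<le> 1"
  shows "\<bar>poly (cheb_T n) y\<bar> \<le> 1"
proof -
  have "y = cos (arccos y)" using assms by simp
  then have "poly (cheb_T n) y = cos (real n * arccos y)" by (metis cheb_cos)
  then show ?thesis by simp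
qed

lemma degree_cheb: "degree (cheb_T n) \<le> n"
proof (induction n rule: cheb_T.induct)
  case (3 n)
  have "degree ([:0, 2:] * cheb_T (Suc n)) \<le> Suc (Suc n)"
    by (rule order.trans[OF degree_mult_le]) (use 3 in auto)
  moreover have "degree (cheb_T n) \<le> Suc (Suc n)" using 3 by simp
  ultimately show ?case by (simp add: degree_diff_le)
qed auto

lemma l1_norm_le:
  assumes "degree p \<le> n"
  shows "l1_norm p = (\<Sum>i\<le>n. \<bar>coeff p i\<bar>)"
  unfolding l1_norm_def
  by (rule sum.mono_neutral_left) (use assms in \<open>auto simp: coeff_eq_0\<close>)

lemma poly_sum_le: "degree (p :: real poly) \<le> n \<Longrightarrow> poly p x = (\<Sum>i\<le>n. coeff p i * x ^ i)"
  unfolding poly_altdef[of p x]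
  by (rule sum.mono_neutral_left) (auto simp: coeff_eq_0)

lemma bdd_sup: "bdd_above ((\<lambda>x. \<bar>poly p x\<bar>) ` {0..(r::real)})"
proof -
  have "compact ((\<lambda>x. \<bar>poly p x\<bar>) ` {0..r})"
    by (intro compact_continuous_image continuous_intros) auto
  then show ?thesis by (intro bounded_imp_bdd_above compact_imp_bounded)
qed

lemma sup_norm_ge: "x \<in> {0..r} \<Longrightarrow> \<bar>poly p x\<bar> \<le> sup_norm_on r p"
  unfolding sup_norm_on_def by (rule cSUP_upper[OF _ bdd_sup])

lemma sup_norm_nonneg: "0 \<le> r \<Longrightarrow> 0 \<le> sup_norm_on r p"
  using sup_norm_ge[of 0 r p] by auto

lemma sup_norm_le: "0 \<le> r \<Longrightarrow> (\<And>x. x \<in> {0..r} \<Longrightarrow> \<bar>poly p x\<bar> \<le> B) \<Longrightarrow> sup_norm_on r p \<le> B"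
  unfolding sup_norm_on_def by (rule cSUP_least) auto


definition feas :: "nat \<Rightarrow> real \<Rightarrow> real poly set" where
  "feas k C = {p. degree p \<le> k \<and> poly p 1 = 1 \<and> l1_norm p \<le> C}"

lemma rt_def2: "rho_tilde k r C = (INF p\<in>feas k C. sup_norm_on r p)"
  unfolding rho_tilde_def feas_def by simp

lemma bdd_below_feas: "0 \<le> r \<Longrightarrow> bdd_below ((sup_norm_on r) ` A)"
  by (rule bdd_belowI[of _ 0]) (auto intro: sup_norm_nonneg)

lemma rt_le: "0 \<le> r \<Longrightarrow> p \<in> feas k C \<Longrightarrow> rho_tilde k r C \<le> sup_norm_on r p"
  unfolding rt_def2 by (rule cINF_lower[OF bdd_below_feas])

lemma rt_approx:
  assumes "0 \<le> r" "feas k C \<noteq> {}" "e > 0"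
  shows "\<exists>p\<in>feas k C. sup_norm_on r p < rho_tilde k r C + e"
proof -
  have "rho_tilde k r C < rho_tilde k r C + e" using assms by simp
  then show ?thesis unfolding rt_def2
    using cINF_less_iff[OF assms(2) bdd_below_feas[OF assms(1)]] by blast
qed

lemma l1_monom: "l1_norm (monom (1::real) k) = 1"
  by (subst l1_norm_le[of _ k]) (auto simp: degree_monom_le coeff_monom)

lemma monom_feas: "C \<ge> 1 \<Longrightarrow> monom 1 k \<in> feas k C"
  unfolding feas_def by (auto simp: degree_monom_le poly_monom l1_monom)

lemma rt_convex: "0 \<le> r \<Longrightarrow> convex_on {1..} (rho_tilde k r)"
proof (rule convex_onI)
  fix t x y :: real
  assume r: "0 \<le> r" and t: "0 < t" "t < 1" and xy: "x \<in> {1..}" "y \<in> {1..}"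
  show "rho_tilde k r ((1 - t) *\<^sub>R x + t *\<^sub>R y) \<le> (1 - t) * rho_tilde k r x + t * rho_tilde k r y"
  proof (rule field_le_epsilon)
    fix e :: real assume e: "0 < e"
    obtain p1 where p1: "p1 \<in> feas k x" "sup_norm_on r p1 < rho_tilde k r x + e"
      using rt_approx[OF r _ e, of k x] monom_feas[of x k] xy by auto
    obtain p2 where p2: "p2 \<in> feas k y" "sup_norm_on r p2 < rho_tilde k r y + e"
      using rt_approx[OF r _ e, of k y] monom_feas[of y k] xy by auto
    define q where "q = smult (1 - t) p1 + smult t p2"
    have d1: "degree p1 \<le> k" and d2: "degree p2 \<le> k" using p1 p2 by (auto simp: feas_def)
    have "degree (smult (1 - t) p1) \<le> k" "degree (smult t p2) \<le> k"
      using d1 d2 degree_smult_le order.trans by blast+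
    then have dq: "degree q \<le> k" unfolding q_def by (intro degree_add_le)
    have pq: "poly q 1 = 1" using p1 p2 by (auto simp: feas_def q_def algebra_simps)
    have "l1_norm q = (\<Sum>i\<le>k. \<bar>(1-t) * coeff p1 i + t * coeff p2 i\<bar>)"
      using l1_norm_le[OF dq] by (simp add: q_def)
    also have "\<dots> \<le> (\<Sum>i\<le>k. (1-t) * \<bar>coeff p1 i\<bar> + t * \<bar>coeff p2 i\<bar>)"
      by (intro sum_mono) (use t in \<open>auto simp: abs_mult intro: order.trans[OF abs_triangle_ineq]\<close>)
    also have "\<dots> = (1-t) * l1_norm p1 + t * l1_norm p2"
      by (simp add: sum.distrib sum_distrib_left l1_norm_le[OF d1] l1_norm_le[OF d2])
    also have "\<dots> \<le> (1-t) * x + t * y"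
      using p1 p2 t by (intro add_mono mult_left_mono) (auto simp: feas_def)
    finally have "q \<in> feas k ((1 - t) *\<^sub>R x + t *\<^sub>R y)" using dq pq by (simp add: feas_def)
    then have "rho_tilde k r ((1 - t) *\<^sub>R x + t *\<^sub>R y) \<le> sup_norm_on r q" by (rule rt_le[OF r])
    also have "sup_norm_on r q \<le> (1-t) * sup_norm_on r p1 + t * sup_norm_on r p2"
    proof (rule sup_norm_le[OF r])
      fix z assume z: "z \<in> {0..r}"
      have "\<bar>poly q z\<bar> \<le> (1-t) * \<bar>poly p1 z\<bar> + t * \<bar>poly p2 z\<bar>"
        using t by (auto simp: q_def abs_mult intro: order.trans[OF abs_triangle_ineq])
      also have "\<dots> \<le> (1-t) * sup_norm_on r p1 + t * sup_norm_on r p2"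
        using t sup_norm_ge[OF z, of p1] sup_norm_ge[OF z, of p2] by (intro add_mono mult_left_mono) auto
      finally show "\<bar>poly q z\<bar> \<le> (1-t) * sup_norm_on r p1 + t * sup_norm_on r p2" .
    qed
    also have "\<dots> \<le> (1-t) * (rho_tilde k r x + e) + t * (rho_tilde k r y + e)"
      using p1 p2 t by (intro add_mono mult_left_mono) auto
    also have "\<dots> = (1 - t) * rho_tilde k r x + t * rho_tilde k r y + e" by (simp add: algebra_simps)
    finally show "rho_tilde k r ((1 - t) *\<^sub>R x + t *\<^sub>R y) \<le> (1 - t) * rho_tilde k r x + t * rho_tilde k r y + e" .
  qed
qed (simp add: convex_real_interval)

lemma rt_one: "0 \<le> r \<Longrightarrow> rho_tilde k r 1 \<le> r ^ k"
proof -
  assume r: "0 \<le> r"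
  have "rho_tilde k r 1 \<le> sup_norm_on r (monom 1 k)" by (rule rt_le[OF r monom_feas]) simp
  also have "\<dots> \<le> r ^ k"
    by (rule sup_norm_le[OF r]) (auto simp: poly_monom intro: power_mono)
  finally show ?thesis .
qed


lemma beta_facts:
  assumes "0 < r" "r < 1"
  shows "0 < beta_rho r" "(2 - r) / r = (1 / beta_rho r + 1 / (1 / beta_rho r)) / 2"
proof -
  define s where "s = sqrt (1 - r)"
  have s: "0 < s" "s < 1" "s^2 = 1 - r" using assms by (auto simp: s_def real_sqrt_less_iff)
  have b: "beta_rho r = (1 - s) / (1 + s)" by (simp add: beta_rho_def s_def)
  show "0 < beta_rho r" unfolding b using s by simp
  have r_eq: "r = 1 - s * s" using s by (simp add: power2_eq_square)
  have nz: "1 - s \<noteq> 0" "1 + s \<noteq> 0" "1 - s * s \<noteq> 0" using s assms r_eq by auto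
  have A: "(1 / ((1 - s) / (1 + s)) + 1 / (1 / ((1 - s) / (1 + s)))) / 2 = (1 + s * s) / (1 - s * s)"
    using nz by (simp add: field_simps)
  have B: "(2 - r) / r = (1 + s * s) / (1 - s * s)" using nz unfolding r_eq by (simp add: field_simps)
  show "(2 - r) / r = (1 / beta_rho r + 1 / (1 / beta_rho r)) / 2" unfolding b A B by (rule refl)
qed

lemma T0_eq:
  assumes "0 < r" "r < 1"
  shows "poly (cheb_T k) ((2 - r) / r) = (1 / beta_rho r ^ k + beta_rho r ^ k) / 2"
proof -
  have b: "0 < beta_rho r" using beta_facts[OF assms] by simp
  have "poly (cheb_T k) ((2 - r) / r) = ((1 / beta_rho r)^k + 1 / (1 / beta_rho r)^k) / 2"
    by (subst beta_facts(2)[OF assms]) (rule cheb_cosh, use b in simp)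
  then show ?thesis by (simp add: power_one_over)
qed

lemma poly_p_star:
  "poly (p_star k r) x = poly (cheb_T k) (-1 + x * (2 / r)) / \<bar>poly (cheb_T k) ((2 - r) / r)\<bar>"
  by (simp add: p_star_def poly_pcompose)

lemma p_star_props:
  assumes "0 < r" "r < 1"
  shows "degree (p_star k r) \<le> k" "poly (p_star k r) 1 = 1"
    "sup_norm_on r (p_star k r) \<le> rho_star k r"
    "0 < poly (cheb_T k) ((2 - r) / r)"
proof -
  let ?b = "beta_rho r"
  have b: "0 < ?b" using beta_facts[OF assms] by simp
  show T0: "0 < poly (cheb_T k) ((2 - r) / r)" unfolding T0_eq[OF assms] using b by (intro divide_pos_pos add_pos_pos) simp_all
  have "degree (p_star k r) \<le> degree (pcompose (cheb_T k) [: -1, 2 / r :])"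
    unfolding p_star_def by (rule degree_smult_le)
  also have "\<dots> \<le> k" using degree_cheb[of k] by (simp add: degree_pcompose)
  finally show "degree (p_star k r) \<le> k" .
  have "-1 + 1 * (2 / r) = (2 - r) / r" using assms by (simp add: field_simps)
  then show "poly (p_star k r) 1 = 1" unfolding poly_p_star using T0 by simp
  have "sup_norm_on r (p_star k r) \<le> 1 / poly (cheb_T k) ((2 - r) / r)"
  proof (rule sup_norm_le)
    fix x assume x: "x \<in> {0..r}"
    have "-1 \<le> -1 + x * (2 / r)" "-1 + x * (2 / r) \<le> 1" using x assms by (auto simp: field_simps)
    then have "\<bar>poly (cheb_T k) (-1 + x * (2 / r))\<bar> \<le> 1" by (rule cheb_bounded)
    then show "\<bar>poly (p_star k r) x\<bar> \<le> 1 / poly (cheb_T k) ((2 - r) / r)"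
      unfolding poly_p_star using T0 by (simp add: divide_right_mono)
  qed (use assms in simp)
  also have "1 / poly (cheb_T k) ((2 - r) / r) = rho_star k r"
    unfolding T0_eq[OF assms] rho_star_def using b
    by (simp add: field_simps power_mult power2_eq_square)
  finally show "sup_norm_on r (p_star k r) \<le> rho_star k r" .
qed

lemma l1_ge_poly1:
  fixes p :: "real poly"
  shows "\<bar>poly p 1\<bar> \<le> l1_norm p"
  unfolding poly_sum_le[OF order.refl] l1_norm_def
  by (rule order.trans[OF sum_abs]) simp

lemma l1_eq_one_nonneg:
  fixes p :: "real poly"
  assumes "l1_norm p = 1" "poly p 1 = 1" "x \<ge> 0"
  shows "poly p x \<ge> 0"
proof -
  have "(\<Sum>i\<le>degree p. \<bar>coeff p i\<bar> - coeff p i) = 0"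
    using assms poly_sum_le[OF order.refl, of p 1] by (simp add: sum_subtractf l1_norm_def)
  then have "\<forall>i\<in>{..degree p}. \<bar>coeff p i\<bar> - coeff p i = 0"
    by (subst sum_nonneg_eq_0_iff[symmetric]) auto
  then have "\<forall>i\<in>{..degree p}. coeff p i \<ge> 0" by (metis abs_ge_zero eq_iff_diff_eq_0)
  then show ?thesis unfolding poly_sum_le[OF order.refl] using assms(3)
    by (intro sum_nonneg) auto
qed

lemma C_star_gt:
  assumes "0 < r" "r < 1" "k \<ge> 1"
  shows "C_star k r > 1"
proof -
  have T0: "0 < poly (cheb_T k) ((2 - r) / r)" using p_star_props[OF assms(1,2)] by simp
  have p1: "poly (p_star k r) 1 = 1" using p_star_props[OF assms(1,2)] by simp
  have ge: "C_star k r \<ge> 1" unfolding C_star_def using l1_ge_poly1[of "p_star k r"] p1 by simp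
  define x where "x = r * (1 + cos (pi / k)) / 2"
  have "1 + cos (pi / k) \<ge> 0" using cos_ge_minus_one[of "pi / k"] by linarith
  then have x0: "x \<ge> 0" unfolding x_def using assms by simp
  have "-1 + x * (2 / r) = cos (pi / k)" unfolding x_def using assms by (simp add: field_simps)
  moreover have "poly (cheb_T k) (cos (pi / k)) = cos (real k * (pi / k))" by (rule cheb_cos)
  moreover have "real k * (pi / k) = pi" using assms by simp
  ultimately have "poly (p_star k r) x = -1 / \<bar>poly (cheb_T k) ((2 - r) / r)\<bar>"
    unfolding poly_p_star by simp
  also have "\<dots> = -1 / poly (cheb_T k) ((2 - r) / r)" using T0 by simp
  also have "\<dots> < 0" using T0 by simp
  finally have "poly (p_star k r) x < 0" .
  then have "C_star k r \<noteq> 1" using l1_eq_one_nonneg[OF _ p1 x0] unfolding C_star_def by force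
  then show ?thesis using ge by simp
qed

theorem lemma1:
  fixes k :: nat and \<rho> :: real
  assumes "k \<ge> 1" and "0 < \<rho>" and "\<rho> < 1"
  shows "convex_on {1..} (rho_tilde k \<rho>) \<and>
         (\<forall>C\<in>{1..C_star k \<rho>}.
            rho_tilde k \<rho> C \<le> (C_star k \<rho> - C) / (C_star k \<rho> - 1) * \<rho> ^ k
                              + (C - 1) / (C_star k \<rho> - 1) * rho_star k \<rho>)"
proof
  have r: "0 \<le> \<rho>" using assms by simp
  show cv: "convex_on {1..} (rho_tilde k \<rho>)" by (rule rt_convex[OF r])
  show "\<forall>C\<in>{1..C_star k \<rho>}.
            rho_tilde k \<rho> C \<le> (C_star k \<rho> - C) / (C_star k \<rho> - 1) * \<rho> ^ k
                              + (C - 1) / (C_star k \<rho> - 1) * rho_star k \<rho>"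
  proof
    fix C assume C: "C \<in> {1..C_star k \<rho>}"
    define S where "S = C_star k \<rho>"
    have S1: "S > 1" unfolding S_def using C_star_gt assms by simp
    define t where "t = (C - 1) / (S - 1)"
    have t: "0 \<le> t" "t \<le> 1" using C S1 by (auto simp: t_def S_def field_simps)
    have tS: "t * (S - 1) = C - 1" using S1 by (simp add: t_def)
    have "(1 - t) *\<^sub>R 1 + t *\<^sub>R S = 1 + t * (S - 1)" by (simp add: algebra_simps)
    then have eqC: "(1 - t) *\<^sub>R 1 + t *\<^sub>R S = C" using tS by simp
    have 1: "1 - t = (S - C) / (S - 1)" using S1 by (simp add: t_def field_simps)
    have fS: "rho_tilde k \<rho> S \<le> rho_star k \<rho>"
    proof -
      have "p_star k \<rho> \<in> feas k S"
        using p_star_props[OF assms(2,3)] by (simp add: feas_def S_def C_star_def)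
      then have "rho_tilde k \<rho> S \<le> sup_norm_on \<rho> (p_star k \<rho>)" by (rule rt_le[OF r])
      also have "\<dots> \<le> rho_star k \<rho>" using p_star_props[OF assms(2,3)] by simp
      finally show ?thesis .
    qed
    have "rho_tilde k \<rho> C \<le> (1 - t) * rho_tilde k \<rho> 1 + t * rho_tilde k \<rho> S"
      using convex_onD[OF cv t, of 1 S] S1 unfolding eqC by simp
    also have "\<dots> \<le> (1 - t) * \<rho> ^ k + t * rho_star k \<rho>"
      using t rt_one[OF r, of k] fS by (intro add_mono mult_left_mono) auto
    finally show "rho_tilde k \<rho> C \<le> (C_star k \<rho> - C) / (C_star k \<rho> - 1) * \<rho> ^ k
                              + (C - 1) / (C_star k \<rho> - 1) * rho_star k \<rho>"
      unfolding 1 by (simp add: S_def t_def)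
  qed
qed

end
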